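(* Let $(\Gamma,M)$ be a three-node E-GCM graph in which every pair of distinct nodes is adjacent (a triangle) and every adjacency is odd, i.e. $m_{ij}$ is odd for all $i\ne j$. Then $(\Gamma,M)$ is not admissible.
   Context: E-GCM $M=(M_{ij})_{i,j\in I_n}$: real, $M_{ii}=2$, $M_{ij}\le0$ ($i\ne j$), $M_{ij}\ne0\iff M_{ji}\ne0$, nonzero $M_{ij}M_{ji}$ either $\ge4$ or $=4\cos^2(\pi/m)$ with $m\ge3$ integer; nodes $\gamma_i$ adjacent iff $M_{ij}\ne 0$. For $i\ne j$, $m_{ij}=k$ if $M_{ij}M_{ji}=4\cos^2(\pi/k)$ for an integer $k\ge2$, and $m_{ij}=\infty$ if $M_{ij}M_{ji}\ge4$. Positions $\lambda\in\mathbb{R}^n$; firing $\gamma_i$ (allowed iff $\lambda_i>0$) replaces $\lambda_j$ by $\lambda_j-M_{ij}\lambda_i$. Numbers game: fire nodes with positive population while any exist; a game sequence is convergent if finite. A connected E-GCM graph is admissible if some nonzero position with all $\lambda_i\ge 0$ has a convergent game sequence. *)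

theory Defs
  imports Complex_Main
begin

text \<open>Nodes are indexed by {0..<n}; a matrix is a function nat => nat => real,
  a position is a function nat => real (only entries below n matter).\<close>

definition egcm :: "nat \<Rightarrow> (nat \<Rightarrow> nat \<Rightarrow> real) \<Rightarrow> bool" where
  "egcm n M \<longleftrightarrow>
     (\<forall>i<n. M i i = 2) \<and>
     (\<forall>i<n. \<forall>j<n. i \<noteq> j \<longrightarrow> M i j \<le> 0) \<and>
     (\<forall>i<n. \<forall>j<n. M i j \<noteq> 0 \<longleftrightarrow> M j i \<noteq> 0) \<and>
     (\<forall>i<n. \<forall>j<n. i \<noteq> j \<longrightarrow> M i j * M j i \<noteq> 0 \<longrightarrow>
        (M i j * M j i \<ge> 4 \<or>
         (\<exists>m::nat. m \<ge> 3 \<and> M i j * M j i = 4 * (cos (pi / real m))\<^sup>2)))"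

definition adjacent :: "nat \<Rightarrow> (nat \<Rightarrow> nat \<Rightarrow> real) \<Rightarrow> nat \<Rightarrow> nat \<Rightarrow> bool" where
  "adjacent n M i j \<longleftrightarrow> i < n \<and> j < n \<and> i \<noteq> j \<and> M i j \<noteq> 0"

definition graph_connected :: "nat \<Rightarrow> (nat \<Rightarrow> nat \<Rightarrow> real) \<Rightarrow> bool" where
  "graph_connected n M \<longleftrightarrow> (\<forall>i<n. \<forall>j<n. (adjacent n M)\<^sup>*\<^sup>* i j)"

text \<open>m_ij is an odd integer: M_ij M_ji = 4 cos^2(pi/k) for some odd integer k >= 2
  (i.e. k >= 3); m_ij = infinity is not odd.\<close>
definition odd_bond :: "(nat \<Rightarrow> nat \<Rightarrow> real) \<Rightarrow> nat \<Rightarrow> nat \<Rightarrow> bool" where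
  "odd_bond M i j \<longleftrightarrow>
     (\<exists>k::nat. k \<ge> 2 \<and> odd k \<and> M i j * M j i = 4 * (cos (pi / real k))\<^sup>2)"

definition fire :: "nat \<Rightarrow> (nat \<Rightarrow> nat \<Rightarrow> real) \<Rightarrow> nat \<Rightarrow> (nat \<Rightarrow> real) \<Rightarrow> (nat \<Rightarrow> real)" where
  "fire n M i lam = (\<lambda>j. if j < n then lam j - M i j * lam i else lam j)"

fun legal_play :: "nat \<Rightarrow> (nat \<Rightarrow> nat \<Rightarrow> real) \<Rightarrow> (nat \<Rightarrow> real) \<Rightarrow> nat list \<Rightarrow> bool" where
  "legal_play n M lam [] = True"
| "legal_play n M lam (i # is) =
     (i < n \<and> lam i > 0 \<and> legal_play n M (fire n M i lam) is)"

fun play :: "nat \<Rightarrow> (nat \<Rightarrow> nat \<Rightarrow> real) \<Rightarrow> (nat \<Rightarrow> real) \<Rightarrow> nat list \<Rightarrow> (nat \<Rightarrow> real)" where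
  "play n M lam [] = lam"
| "play n M lam (i # is) = play n M (fire n M i lam) is"

definition convergent_game_seq ::
  "nat \<Rightarrow> (nat \<Rightarrow> nat \<Rightarrow> real) \<Rightarrow> (nat \<Rightarrow> real) \<Rightarrow> nat list \<Rightarrow> bool" where
  "convergent_game_seq n M lam s \<longleftrightarrow>
     legal_play n M lam s \<and> (\<forall>j<n. play n M lam s j \<le> 0)"

definition admissible :: "nat \<Rightarrow> (nat \<Rightarrow> nat \<Rightarrow> real) \<Rightarrow> bool" where
  "admissible n M \<longleftrightarrow> egcm n M \<and> graph_connected n M \<and>
     (\<exists>lam. (\<forall>i<n. lam i \<ge> 0) \<and> (\<exists>i<n. lam i \<noteq> 0) \<and>
            (\<exists>s. convergent_game_seq n M lam s))"

end

theory Submission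
  imports Defs
begin

lemma odd_bond_bounds:
  assumes "odd_bond M i j"
  shows "M i j * M j i \<ge> 1" "M i j * M j i < 4"
proof -
  obtain k :: nat where k: "k \<ge> 2" "odd k" "M i j * M j i = 4 * (cos (pi / real k))\<^sup>2"
    using assms unfolding odd_bond_def by blast
  have k3: "k \<ge> 3" using k by (cases "k = 2") auto
  have p0: "0 < pi / real k" using k3 by simp
  have p1: "pi / real k \<le> pi / 3" using k3 by (intro divide_left_mono) auto
  have p2: "pi / 3 \<le> pi" by simp
  have c1: "cos (pi / 3) \<le> cos (pi / real k)"
    using cos_monotone_0_pi_le[of "pi / real k" "pi / 3"] p0 p1 by simp
  hence ch: "1/2 \<le> cos (pi / real k)" by (simp add: cos_60)
  have "cos (pi / real k) < 1"
  proof -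
    have "pi / real k < 2 * pi" using p1 pi_gt_zero by linarith
    thus ?thesis using cos_monotone_0_pi[of 0 "pi / real k"] p0 p1 by simp
  qed
  have "(1/2)^2 \<le> (cos (pi / real k))\<^sup>2" using ch by (intro power_mono) auto
  hence "1/4 \<le> (cos (pi / real k))\<^sup>2" by (simp add: power2_eq_square)
  thus "M i j * M j i \<ge> 1" using k(3) by linarith
  have "(cos (pi / real k))\<^sup>2 < 1"
    using \<open>cos (pi / real k) < 1\<close> ch by (simp add: abs_square_less_1)
  thus "M i j * M j i < 4" using k(3) by simp
qed

lemma amgm2:
  fixes u v :: real
  assumes "u > 0" "v > 0" "u * v \<ge> 1"
  shows "u + v \<ge> 2"
proof (rule ccontr)
  assume "\<not> u + v \<ge> 2"
  hence "(u + v)^2 < 2^2" using assms by (intro power_strict_mono) auto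
  moreover have "(u+v)^2 = (u-v)^2 + 4*(u*v)" by (simp add: power2_eq_square algebra_simps)
  moreover have "(u-v)^2 \<ge> 0" by simp
  ultimately show False using assms by simp
qed

definition FF :: "real \<Rightarrow> real \<Rightarrow> real \<Rightarrow> (nat \<Rightarrow> real) \<Rightarrow> real" where
  "FF x0 x1 x2 lam = x0 * lam 0 + x1 * lam 1 + x2 * lam 2"

lemma step:
  assumes rows: "\<forall>i<3. M i 0 * x0 + M i 1 * x1 + M i 2 * x2 \<le> 0"
    and i: "i < 3" and pos: "lam i > 0"
  shows "FF x0 x1 x2 lam \<le> FF x0 x1 x2 (fire 3 M i lam)"
proof -
  have h: "(M i 0 * x0 + M i 1 * x1 + M i 2 * x2) * lam i \<le> 0"
    using rows i pos by (simp add: mult_nonpos_nonneg)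
  thus ?thesis unfolding FF_def fire_def by (simp add: algebra_simps)
qed

lemma play_mono:
  assumes rows: "\<forall>i<3. M i 0 * x0 + M i 1 * x1 + M i 2 * x2 \<le> 0"
  shows "legal_play 3 M lam s \<Longrightarrow> FF x0 x1 x2 lam \<le> FF x0 x1 x2 (play 3 M lam s)"
proof (induction s arbitrary: lam)
  case Nil
  then show ?case by simp
next
  case (Cons i s)
  then have "i < 3" "lam i > 0" "legal_play 3 M (fire 3 M i lam) s" by auto
  then have "FF x0 x1 x2 lam \<le> FF x0 x1 x2 (fire 3 M i lam)" using step[OF rows] by blast
  also have "\<dots> \<le> FF x0 x1 x2 (play 3 M (fire 3 M i lam) s)" using Cons.IH \<open>legal_play 3 M (fire 3 M i lam) s\<close> by blast
  finally show ?case by simp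
qed

theorem lemma4p15:
  fixes M :: "nat \<Rightarrow> nat \<Rightarrow> real"
  assumes "egcm 3 M"
    and "\<forall>i<3. \<forall>j<3. i \<noteq> j \<longrightarrow> adjacent 3 M i j"
    and "\<forall>i<3. \<forall>j<3. i \<noteq> j \<longrightarrow> odd_bond M i j"
  shows "\<not> admissible 3 M"
proof
  assume adm: "admissible 3 M"
  define a where "a = - M 0 1"
  define b where "b = - M 1 0"
  define c where "c = - M 1 2"
  define d where "d = - M 2 1"
  define e where "e = - M 2 0"
  define g where "g = - M 0 2"
  have diag: "M 0 0 = 2" "M 1 1 = 2" "M 2 2 = 2" using assms(1) unfolding egcm_def by auto
  have np: "\<And>i j. i < 3 \<Longrightarrow> j < 3 \<Longrightarrow> i \<noteq> j \<Longrightarrow> M i j < 0"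
  proof -
    fix i j :: nat assume "i < 3" "j < 3" "i \<noteq> j"
    hence "M i j \<le> 0" "M i j \<noteq> 0" using assms(1,2) unfolding egcm_def adjacent_def by auto
    thus "M i j < 0" by simp
  qed
  have pos: "a > 0" "b > 0" "c > 0" "d > 0" "e > 0" "g > 0"
    unfolding a_def b_def c_def d_def e_def g_def using np by auto
  have ab: "a * b \<ge> 1" using odd_bond_bounds(1)[of M 0 1] assms(3) unfolding a_def b_def by auto
  have cd: "c * d \<ge> 1" "c * d < 4"
    using odd_bond_bounds[of M 1 2] assms(3) unfolding c_def d_def by auto
  have eg: "e * g \<ge> 1" using odd_bond_bounds(1)[of M 2 0] assms(3) unfolding e_def g_def by auto
  define x0 where "x0 = 4 - c * d"
  define x1 where "x1 = 2 * b + c * e"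
  define x2 where "x2 = 2 * e + d * b"
  have xpos: "x0 > 0" "x1 > 0" "x2 > 0" unfolding x0_def x1_def x2_def using cd pos by (auto intro: add_pos_pos mult_pos_pos)
  have uv: "(a * c * e) * (b * d * g) \<ge> 1"
  proof -
    have "(a * c * e) * (b * d * g) = (a * b) * ((c * d) * (e * g))" by (simp add: algebra_simps)
    also have "\<dots> \<ge> 1 * (1 * 1)" using ab cd eg by (intro mult_mono) auto
    finally show ?thesis by simp
  qed
  have s2: "a * c * e + b * d * g \<ge> 2" using amgm2[OF _ _ uv] pos by simp
  have row0: "2 * x0 - a * x1 - g * x2 \<le> 0"
  proof -
    have "2 * x0 - a * x1 - g * x2 = 8 - 2 * (a*b) - 2 * (c*d) - 2 * (e*g) - (a*c*e + b*d*g)"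
      unfolding x0_def x1_def x2_def by (simp add: algebra_simps)
    thus ?thesis using ab cd eg s2 by linarith
  qed
  have row1: "- b * x0 + 2 * x1 - c * x2 = 0"
    unfolding x0_def x1_def x2_def by (simp add: algebra_simps)
  have row2: "- e * x0 - d * x1 + 2 * x2 = 0"
    unfolding x0_def x1_def x2_def by (simp add: algebra_simps)
  have rows: "\<forall>i<3. M i 0 * x0 + M i 1 * x1 + M i 2 * x2 \<le> 0"
  proof (intro allI impI)
    fix i :: nat assume "i < 3"
    hence "i = 0 \<or> i = 1 \<or> i = 2" by auto
    thus "M i 0 * x0 + M i 1 * x1 + M i 2 * x2 \<le> 0"
      using row0 row1 row2 diag unfolding a_def b_def c_def d_def e_def g_def by auto
  qed
  obtain lam s where l0: "\<forall>i<3. lam i \<ge> 0" and l1: "\<exists>i<3. lam i \<noteq> 0"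
    and cs: "convergent_game_seq 3 M lam s"
    using adm unfolding admissible_def by blast
  have "FF x0 x1 x2 lam > 0"
  proof -
    have n: "x0 * lam 0 \<ge> 0" "x1 * lam 1 \<ge> 0" "x2 * lam 2 \<ge> 0"
      using l0 xpos by auto
    obtain i where i: "i < 3" "lam i \<noteq> 0" using l1 by blast
    hence "lam i > 0" using l0 by (simp add: order_less_le)
    hence "i = 0 \<or> i = 1 \<or> i = 2" using i by auto
    hence "x0 * lam 0 > 0 \<or> x1 * lam 1 > 0 \<or> x2 * lam 2 > 0"
      using \<open>lam i > 0\<close> xpos by auto
    thus ?thesis unfolding FF_def using n by linarith
  qed
  moreover have "FF x0 x1 x2 (play 3 M lam s) \<le> 0"
  proof -
    have "play 3 M lam s 0 \<le> 0" "play 3 M lam s 1 \<le> 0" "play 3 M lam s 2 \<le> 0"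
      using cs unfolding convergent_game_seq_def by auto
    hence "x0 * play 3 M lam s 0 \<le> 0" "x1 * play 3 M lam s 1 \<le> 0" "x2 * play 3 M lam s 2 \<le> 0"
      using xpos by (auto simp: mult_nonneg_nonpos)
    thus ?thesis unfolding FF_def by linarith
  qed
  moreover have "FF x0 x1 x2 lam \<le> FF x0 x1 x2 (play 3 M lam s)"
    using play_mono[OF rows] cs unfolding convergent_game_seq_def by blast
  ultimately show False by linarith
qed

end
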